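(* Fix integers $s\ge t\ge 1$ and $n\ge 0$. Let $\mathcal{B}_{s,t}(n)$ be the number of distinct sets of balls that can be on the lawn after $n$ turns of the $(s,t)$-tennis ball process. Then $\mathcal{B}_{s,t}(n)=|\mathrm{SVT}((n+1)^2,\rho)|$, where $\rho$ is the density on the shape $(n+1,n+1)$ with $\rho_{1,j}=t$ and $\rho_{2,j}=s-t$ for all $1\le j\le n+1$.
   Context: The $(s,t)$-tennis ball process: balls are numbered $1,2,\dots,ns$. There is a pool, initially empty. At turn $i$ ($1\le i\le n$), the balls numbered $(i-1)s+1,\dots,is$ are added to the pool, and then any $t$ balls of the pool are removed from it and thrown onto the lawn. After $n$ turns the lawn contains a set of $nt$ balls; $\mathcal{B}_{s,t}(n)$ counts the possible such sets over all possible choices. A density on a shape $\lambda$ is an assignment of a nonnegative integer $\rho_{i,j}$ to every cell $(i,j)$ (row $i$, column $j$); let $N=\sum\rho_{i,j}$. A standard set-valued Young tableau of shape $\lambda$ and density $\rho$ assigns to each cell $(i,j)$ a set $S_{i,j}$ with $|S_{i,j}|=\rho_{i,j}$, the sets partitioning $[N]$, such that every element of $S_{i,j}$ is smaller than every element of $S_{i,j+1}$ and of $S_{i+1,j}$ whenever those cells exist (conditions involving an empty set are vacuous). $\mathrm{SVT}(\lambda,\rho)$ is the set of these tableaux. *)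

theory Defs
  imports Main
begin

text \<open>States after i turns: pairs (pool, lawn). At turn i+1 the balls
  i*s+1, ..., (i+1)*s are added to the pool, then any t balls of the pool
  are thrown onto the lawn.\<close>

fun tennis_states :: "nat \<Rightarrow> nat \<Rightarrow> nat \<Rightarrow> (nat set \<times> nat set) set" where
  "tennis_states s t 0 = {({}, {})}"
| "tennis_states s t (Suc i) =
     {((P \<union> {i*s+1..(Suc i)*s}) - T, L \<union> T) | P L T.
        (P, L) \<in> tennis_states s t i \<and> T \<subseteq> P \<union> {i*s+1..(Suc i)*s} \<and> card T = t}"

definition tennis_lawns :: "nat \<Rightarrow> nat \<Rightarrow> nat \<Rightarrow> nat set set" where
  "tennis_lawns s t n = snd ` tennis_states s t n"

definition tennis_count :: "nat \<Rightarrow> nat \<Rightarrow> nat \<Rightarrow> nat" where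
  "tennis_count s t n = card (tennis_lawns s t n)"

text \<open>A shape is a list of row lengths (rows indexed from 1); the cells are
  (i,j) with 1 \<le> i \<le> length lam and 1 \<le> j \<le> lam!(i-1).\<close>

definition cells :: "nat list \<Rightarrow> (nat \<times> nat) set" where
  "cells lam = {(i, j). 1 \<le> i \<and> i \<le> length lam \<and> 1 \<le> j \<and> j \<le> lam ! (i - 1)}"

definition density_total :: "nat list \<Rightarrow> (nat \<times> nat \<Rightarrow> nat) \<Rightarrow> nat" where
  "density_total lam \<rho> = (\<Sum>c\<in>cells lam. \<rho> c)"

text \<open>Tableaux are functions from cells to sets; outside the cells they are
  the empty set (so that distinct tableaux are distinct functions).\<close>
definition SVT :: "nat list \<Rightarrow> (nat \<times> nat \<Rightarrow> nat) \<Rightarrow> (nat \<times> nat \<Rightarrow> nat set) set" where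
  "SVT lam \<rho> = {S.
      (\<forall>c. c \<notin> cells lam \<longrightarrow> S c = {}) \<and>
      (\<forall>c\<in>cells lam. finite (S c) \<and> card (S c) = \<rho> c) \<and>
      (\<forall>c\<in>cells lam. \<forall>d\<in>cells lam. c \<noteq> d \<longrightarrow> S c \<inter> S d = {}) \<and>
      (\<Union>c\<in>cells lam. S c) = {1..density_total lam \<rho>} \<and>
      (\<forall>i j. (i, j) \<in> cells lam \<and> (i, Suc j) \<in> cells lam \<longrightarrow>
              (\<forall>a\<in>S (i, j). \<forall>b\<in>S (i, Suc j). a < b)) \<and>
      (\<forall>i j. (i, j) \<in> cells lam \<and> (Suc i, j) \<in> cells lam \<longrightarrow>
              (\<forall>a\<in>S (i, j). \<forall>b\<in>S (Suc i, j). a < b))}"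

end

theory Submission
  imports Defs
begin


definition rk :: "nat set \<Rightarrow> nat \<Rightarrow> nat" where "rk X x = card {y\<in>X. y \<le> x}"

lemma rk_mono: "finite X \<Longrightarrow> x \<le> y \<Longrightarrow> rk X x \<le> rk X y"
  unfolding rk_def by (rule card_mono) auto

lemma rk_strict: "finite X \<Longrightarrow> y \<in> X \<Longrightarrow> x < y \<Longrightarrow> rk X x < rk X y"
  unfolding rk_def
proof (rule psubset_card_mono)
  assume "finite X" "y \<in> X" "x < y"
  then have "y \<in> {ya \<in> X. ya \<le> y}" "y \<notin> {y \<in> X. y \<le> x}" by auto
  moreover have "{y \<in> X. y \<le> x} \<subseteq> {ya \<in> X. ya \<le> y}" using \<open>x < y\<close> by auto
  ultimately show "{y \<in> X. y \<le> x} \<subset> {ya \<in> X. ya \<le> y}" by blast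
qed auto

lemma rk_less_imp: "finite X \<Longrightarrow> rk X x < rk X y \<Longrightarrow> x < y"
  using rk_mono[of X y x] by (metis leI not_le)

lemma rk_le_card: "finite X \<Longrightarrow> rk X x \<le> card X"
  unfolding rk_def by (rule card_mono) auto

lemma rk_all: "(\<forall>y\<in>X. y \<le> m) \<Longrightarrow> rk X m = card X"
  unfolding rk_def by (metis (mono_tags, lifting) Collect_mem_eq Collect_cong)

lemma rk_pos: "finite X \<Longrightarrow> x \<in> X \<Longrightarrow> 1 \<le> rk X x"
  unfolding rk_def by (metis (mono_tags, lifting) One_nat_def Suc_leI card_gt_0_iff empty_iff
      finite_subset mem_Collect_eq order_refl subsetI)

lemma rk_bij: "finite X \<Longrightarrow> bij_betw (rk X) X {1..card X}"
proof -
  assume f: "finite X"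
  have inj: "inj_on (rk X) X"
  proof (rule inj_onI)
    fix x y assume "x \<in> X" "y \<in> X" "rk X x = rk X y"
    then show "x = y" using rk_strict[OF f] by (metis less_irrefl nat_neq_iff)
  qed
  have sub: "rk X ` X \<subseteq> {1..card X}" using rk_pos[OF f] rk_le_card[OF f] by auto
  have "card (rk X ` X) = card {1..card X}" using card_image[OF inj] by simp
  then have "rk X ` X = {1..card X}" using sub by (simp add: card_subset_eq)
  then show ?thesis using inj by (simp add: bij_betw_def)
qed

lemma rk_interval_card:
  assumes f: "finite X" and b: "b \<le> card X"
  shows "card {x\<in>X. a < rk X x \<and> rk X x \<le> b} = b - a"
proof -
  have bij: "bij_betw (rk X) X {1..card X}" using rk_bij[OF f] .
  let ?S = "{x\<in>X. a < rk X x \<and> rk X x \<le> b}"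
  have inj: "inj_on (rk X) ?S" using bij unfolding bij_betw_def by (auto intro: inj_on_subset)
  have "rk X ` ?S = {a<..b}"
  proof
    show "rk X ` ?S \<subseteq> {a<..b}" by auto
    show "{a<..b} \<subseteq> rk X ` ?S"
    proof
      fix k assume k: "k \<in> {a<..b}"
      then have "k \<in> {1..card X}" using b by auto
      then obtain x where "x \<in> X" "rk X x = k" using bij by (metis bij_betw_def imageE)
      then show "k \<in> rk X ` ?S" using k by auto
    qed
  qed
  then show ?thesis using card_image[OF inj] by simp
qed

lemma rk_compl:
  assumes "X \<subseteq> {1..N}" "m \<le> N"
  shows "rk X m + rk ({1..N}-X) m = m"
proof -
  have "{y\<in>X. y \<le> m} \<union> {y\<in>{1..N}-X. y \<le> m} = {1..m}" using assms by auto
  moreover have "{y\<in>X. y \<le> m} \<inter> {y\<in>{1..N}-X. y \<le> m} = {}" by auto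
  moreover have "finite {y\<in>X. y \<le> m}" "finite {y\<in>{1..N}-X. y \<le> m}" by auto
  ultimately show ?thesis unfolding rk_def by (metis card_Un_disjoint card_atLeastAtMost diff_Suc_1)
qed

lemma chunk: "0 < (c::nat) \<Longrightarrow> 1 \<le> r \<Longrightarrow> r \<le> m*c \<Longrightarrow> \<exists>j. 1 \<le> j \<and> j \<le> m \<and> (j-1)*c < r \<and> r \<le> j*c"
proof (induction m)
  case 0 then show ?case by simp
next
  case (Suc m)
  show ?case
  proof (cases "r \<le> m*c")
    case True then show ?thesis using Suc by (metis le_Suc_eq)
  next
    case False then show ?thesis using Suc.prems by (intro exI[of _ "Suc m"]) auto
  qed
qed

lemma row_union:
  assumes f: "finite X" and c: "card X = m*c"
  shows "(\<Union>j\<in>{1..m}. {x\<in>X. (j-1)*c < rk X x \<and> rk X x \<le> j*c}) = X"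
proof
  show "X \<subseteq> (\<Union>j\<in>{1..m}. {x\<in>X. (j-1)*c < rk X x \<and> rk X x \<le> j*c})"
  proof
    fix x assume x: "x \<in> X"
    then have "c > 0" using c f by (metis card_0_eq empty_iff mult_0_right neq0_conv)
    moreover have "1 \<le> rk X x" "rk X x \<le> m*c" using rk_pos[OF f x] rk_le_card[OF f] c by auto
    ultimately obtain j where "1 \<le> j \<and> j \<le> m \<and> (j-1)*c < rk X x \<and> rk X x \<le> j*c"
      using chunk by blast
    then show "x \<in> (\<Union>j\<in>{1..m}. {x\<in>X. (j-1)*c < rk X x \<and> rk X x \<le> j*c})" using x by auto
  qed
qed auto

lemma top_t:
  "finite (L::nat set) \<Longrightarrow> k \<le> card L \<Longrightarrow> \<exists>T\<subseteq>L. card T = k \<and> (\<forall>x\<in>T. \<forall>y\<in>L-T. y < x)"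
proof (induction k)
  case 0 then show ?case by (intro exI[of _ "{}"]) auto
next
  case (Suc k)
  then obtain T where T: "T \<subseteq> L" "card T = k" "\<forall>x\<in>T. \<forall>y\<in>L-T. y < x" by auto
  have fT: "finite T" using T(1) Suc.prems finite_subset by blast
  have ne: "L - T \<noteq> {}" using T Suc.prems by (metis Diff_eq_empty_iff Suc_n_not_le_n subset_antisym)
  define z where "z = Max (L - T)"
  have z: "z \<in> L - T" using ne Suc.prems z_def by (metis Max_in finite_Diff)
  have zm: "\<forall>y\<in>L-T. y \<le> z" using Suc.prems z_def by simp
  show ?case
  proof (intro exI[of _ "insert z T"] conjI)
    show "insert z T \<subseteq> L" using z T by auto
    show "card (insert z T) = Suc k" using z T fT by simp
    show "\<forall>x\<in>insert z T. \<forall>y\<in>L - insert z T. y < x"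
      using T(3) zm by (metis Diff_iff insertCI insertE le_neq_implies_less)
  qed
qed



lemma row_ord:
  assumes cpos: "0 < c"
    and fin: "\<And>j. 1\<le>j \<Longrightarrow> j\<le>m \<Longrightarrow> finite (F j) \<and> card (F j) = (c::nat)"
    and ord: "\<And>j a b. 1\<le>j \<Longrightarrow> Suc j \<le> m \<Longrightarrow> a\<in>F j \<Longrightarrow> b\<in>F (Suc j) \<Longrightarrow> (a::nat) < b"
  shows "1 \<le> i \<Longrightarrow> i < j \<Longrightarrow> j \<le> m \<Longrightarrow> a \<in> F i \<Longrightarrow> b \<in> F j \<Longrightarrow> a < b"
proof -
  assume i: "1 \<le> i"
  have main: "\<forall>a b. a \<in> F i \<longrightarrow> b \<in> F (i + Suc d) \<longrightarrow> i + Suc d \<le> m \<longrightarrow> a < b" for d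
  proof (induction d)
    case 0 then show ?case using ord i by auto
  next
    case (Suc d)
    show ?case
    proof (intro allI impI)
      fix a b assume a: "a \<in> F i" and b: "b \<in> F (i + Suc (Suc d))" and m: "i + Suc (Suc d) \<le> m"
      have "card (F (i + Suc d)) = c" using fin[of "i + Suc d"] m i by auto
      then have "F (i + Suc d) \<noteq> {}" using cpos by auto
      then obtain z where z: "z \<in> F (i + Suc d)" by blast
      have "a < z" using Suc.IH a z m by auto
      moreover have "z < b" using ord[of "i + Suc d" z b] z b m i by auto
      ultimately show "a < b" by simp
    qed
  qed
  assume "i < j" "j \<le> m" "a \<in> F i" "b \<in> F j"
  then show "a < b" using main[of "j - i - 1"] by auto
qed

lemma card_prefix:
  assumes fin: "\<And>j. 1\<le>j \<Longrightarrow> j\<le>m \<Longrightarrow> finite (F j) \<and> card (F j) = (c::nat)"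
    and disj: "\<And>i j. 1\<le>i \<Longrightarrow> i\<le>m \<Longrightarrow> 1\<le>j \<Longrightarrow> j\<le>m \<Longrightarrow> i\<noteq>j \<Longrightarrow> F i \<inter> F j = {}"
    and k: "k \<le> m"
  shows "card (\<Union>j\<in>{1..k}. F j) = k*c"
proof -
  have "card (\<Union>j\<in>{1..k}. F j) = (\<Sum>j\<in>{1..k}. card (F j))"
    by (rule card_UN_disjoint) (use fin disj k in auto)
  also have "\<dots> = (\<Sum>j\<in>{1..k}. c)" using fin k by (intro sum.cong) auto
  finally show ?thesis by simp
qed

lemma row_rank:
  assumes fin: "\<And>j. 1\<le>j \<Longrightarrow> j\<le>m \<Longrightarrow> finite (F j) \<and> card (F j) = (c::nat)"
    and ord: "\<And>j a b. 1\<le>j \<Longrightarrow> Suc j \<le> m \<Longrightarrow> a\<in>F j \<Longrightarrow> b\<in>F (Suc j) \<Longrightarrow> (a::nat) < b"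
    and disj: "\<And>i j. 1\<le>i \<Longrightarrow> i\<le>m \<Longrightarrow> 1\<le>j \<Longrightarrow> j\<le>m \<Longrightarrow> i\<noteq>j \<Longrightarrow> F i \<inter> F j = {}"
    and X: "X = (\<Union>j\<in>{1..m}. F j)"
    and j: "1 \<le> j" "j \<le> m"
  shows "F j = {x\<in>X. (j-1)*c < rk X x \<and> rk X x \<le> j*c}"
proof -
  have fX: "finite X" using X fin by auto
  have cX: "card X = m*c" using card_prefix[OF fin disj, of m] X by auto
  have sub: "F j \<subseteq> {x\<in>X. (j-1)*c < rk X x \<and> rk X x \<le> j*c}"
  proof (cases "c = 0")
    case True then show ?thesis using fin[OF j] by auto
  next
    case False
    then have cpos: "0 < c" by simp
    have ro: "\<And>i j a b. 1 \<le> i \<Longrightarrow> i < j \<Longrightarrow> j \<le> m \<Longrightarrow> a \<in> F i \<Longrightarrow> b \<in> F j \<Longrightarrow> a < b"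
      by (rule row_ord[where c=c and m=m and F=F]) (assumption | rule cpos fin ord)+
    show ?thesis
    proof
      fix x assume x: "x \<in> F j"
      have xX: "x \<in> X" using X x j by auto
      have "{y\<in>X. y \<le> x} \<subseteq> (\<Union>i\<in>{1..j}. F i)"
      proof
        fix y assume y: "y \<in> {y\<in>X. y \<le> x}"
        then obtain i where i: "1 \<le> i" "i \<le> m" "y \<in> F i" using X by auto
        have "i \<le> j"
        proof (rule ccontr)
          assume "\<not> i \<le> j"
          then have "x < y" using ro[where i=j and j=i and a=x and b=y] j i x by auto
          then show False using y by auto
        qed
        then show "y \<in> (\<Union>i\<in>{1..j}. F i)" using i by auto
      qed
      moreover have "finite (\<Union>i\<in>{1..j}. F i)" using fin j by auto
      ultimately have "rk X x \<le> card (\<Union>i\<in>{1..j}. F i)" unfolding rk_def by (rule card_mono[rotated])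
      then have up: "rk X x \<le> j*c" using card_prefix[OF fin disj j(2)] by simp
      have "insert x (\<Union>i\<in>{1..j-1}. F i) \<subseteq> {y\<in>X. y \<le> x}"
      proof
        fix y assume y: "y \<in> insert x (\<Union>i\<in>{1..j-1}. F i)"
        show "y \<in> {y\<in>X. y \<le> x}"
        proof (cases "y = x")
          case True then show ?thesis using xX by simp
        next
          case False
          then obtain i where i: "1 \<le> i" "i \<le> j - 1" "y \<in> F i" using y by auto
          have "y < x" using ro[where i=i and j=j and a=y and b=x] i j x by auto
          moreover have "y \<in> X" using X i j by auto
          ultimately show ?thesis by simp
        qed
      qed
      moreover have "x \<notin> (\<Union>i\<in>{1..j-1}. F i)"
      proof
        assume "x \<in> (\<Union>i\<in>{1..j-1}. F i)"
        then obtain i where i: "1 \<le> i" "i \<le> j - 1" "x \<in> F i" by auto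
        then have "F i \<inter> F j = {}" using disj[of i j] j by auto
        then show False using i x by auto
      qed
      moreover have "finite (\<Union>i\<in>{1..j-1}. F i)" using fin j by auto
      ultimately have "card (\<Union>i\<in>{1..j-1}. F i) + 1 \<le> rk X x"
      proof -
        assume a1: "insert x (\<Union>i\<in>{1..j-1}. F i) \<subseteq> {y\<in>X. y \<le> x}"
          and a2: "x \<notin> (\<Union>i\<in>{1..j-1}. F i)" and a3: "finite (\<Union>i\<in>{1..j-1}. F i)"
        have "finite {y\<in>X. y \<le> x}" using fX by simp
        from card_mono[OF this a1] have "card (insert x (\<Union>i\<in>{1..j-1}. F i)) \<le> rk X x"
          unfolding rk_def .
        then show ?thesis using card_insert_disjoint[OF a3 a2] by simp
      qed
      moreover have "card (\<Union>i\<in>{1..j-1}. F i) = (j-1)*c"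
        using card_prefix[OF fin disj, of "j-1"] j by auto
      ultimately have "(j-1)*c < rk X x" by simp
      then show "x \<in> {x\<in>X. (j-1)*c < rk X x \<and> rk X x \<le> j*c}" using up xX by auto
    qed
  qed
  have jc: "j*c \<le> card X" using cX j by simp
  have "card {x\<in>X. (j-1)*c < rk X x \<and> rk X x \<le> j*c} = j*c - (j-1)*c"
    using rk_interval_card[OF fX jc] .
  also have "\<dots> = c" using j by (cases j) auto
  finally have cc: "card {x\<in>X. (j-1)*c < rk X x \<and> rk X x \<le> j*c} = c" .
  have "finite {x\<in>X. (j-1)*c < rk X x \<and> rk X x \<le> j*c}" using fX by simp
  from card_subset_eq[OF this sub] show ?thesis using cc fin[OF j] by simp
qed



definition Aset :: "nat \<Rightarrow> nat \<Rightarrow> nat \<Rightarrow> nat set set" where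
  "Aset s t i = {L. L \<subseteq> {1..i*s} \<and> card L = i*t \<and> (\<forall>k\<le>i. k*t \<le> rk L (k*s))}"

lemma interval_split: "a \<le> b \<Longrightarrow> {1..a} \<union> {a+1..b} = {1..(b::nat)}" by auto

lemma tennis_inv:
  "(P, L) \<in> tennis_states s t i \<Longrightarrow>
     P \<inter> L = {} \<and> P \<union> L = {1..i*s} \<and> card L = i*t \<and> (\<forall>k\<le>i. k*t \<le> rk L (k*s))"
proof (induction i arbitrary: P L)
  case 0 then show ?case by simp
next
  case (Suc i)
  let ?Bl = "{i*s+1..Suc i*s}"
  from Suc.prems obtain P0 L0 T where eq: "P = (P0 \<union> ?Bl) - T" "L = L0 \<union> T"
    and st: "(P0, L0) \<in> tennis_states s t i" and T: "T \<subseteq> P0 \<union> ?Bl" "card T = t"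
    by auto
  note IH = Suc.IH[OF st]
  have spl: "{1..i*s} \<union> ?Bl = {1..Suc i*s}" by (rule interval_split) simp
  have L0sub: "L0 \<subseteq> {1..i*s}" using IH by blast
  have dis: "T \<inter> L0 = {}"
  proof (rule ccontr)
    assume "T \<inter> L0 \<noteq> {}"
    then obtain x where x: "x \<in> T" "x \<in> L0" by blast
    then have "x \<in> P0 \<or> x \<in> ?Bl" using T(1) by blast
    moreover have "x \<notin> P0" using x IH by blast
    moreover have "x \<le> i*s" using x L0sub by auto
    ultimately show False by auto
  qed
  have fL0: "finite L0" using L0sub finite_subset by blast
  have fT: "finite T" using T(1) IH
    by (metis finite_Un finite_atLeastAtMost finite_subset sup.cobounded1)
  have c1: "P \<inter> L = {}" using eq IH L0sub by auto
  have c2: "P \<union> L = {1..Suc i*s}" using eq IH T(1) spl by auto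
  have c3: "card L = Suc i * t" using eq(2) card_Un_disjoint[OF fL0 fT] dis IH T(2) by (simp add: Int_commute)
  have fL: "finite L" using eq fL0 fT by simp
  have c4: "\<forall>k\<le>Suc i. k*t \<le> rk L (k*s)"
  proof (intro allI impI)
    fix k assume k: "k \<le> Suc i"
    show "k*t \<le> rk L (k*s)"
    proof (cases "k \<le> i")
      case True
      then have "k*t \<le> rk L0 (k*s)" using IH by blast
      also have "\<dots> \<le> rk L (k*s)" unfolding rk_def using fL eq(2) by (intro card_mono) auto
      finally show ?thesis .
    next
      case False
      then have "k = Suc i" using k by simp
      moreover have "\<forall>y\<in>L. y \<le> Suc i * s" using c2 by auto
      ultimately show ?thesis using rk_all c3 by simp
    qed
  qed
  show ?case using c1 c2 c3 c4 by blast
qed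

lemma tennis_complete:
  assumes ts: "t \<le> s"
  shows "L \<in> Aset s t i \<Longrightarrow> ({1..i*s} - L, L) \<in> tennis_states s t i"
proof (induction i arbitrary: L)
  case 0 then show ?case by (simp add: Aset_def)
next
  case (Suc i)
  let ?Bl = "{i*s+1..Suc i*s}"
  have LA: "L \<subseteq> {1..Suc i*s}" "card L = Suc i * t" "\<forall>k\<le>Suc i. k*t \<le> rk L (k*s)"
    using Suc.prems unfolding Aset_def by auto
  have fL: "finite L" using LA(1) finite_subset by blast
  obtain T where T: "T \<subseteq> L" "card T = t" "\<forall>x\<in>T. \<forall>y\<in>L-T. y < x"
    using top_t[OF fL, of t] LA(2) by auto
  define L0 where "L0 = L - T"
  have fT: "finite T" using T(1) fL finite_subset by blast
  have cL0: "card L0 = i*t" unfolding L0_def using card_Diff_subset[OF fT T(1)] LA(2) T(2) by simp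
  have rki: "i*t \<le> rk L (i*s)" using LA(3) by simp
  have L0sub: "L0 \<subseteq> {1..i*s}"
  proof
    fix x assume x: "x \<in> L0"
    have x1: "1 \<le> x" using x LA(1) L0_def by auto
    show "x \<in> {1..i*s}"
    proof (rule ccontr)
      assume "x \<notin> {1..i*s}"
      then have xg: "i*s < x" using x1 by auto
      have "insert x T \<subseteq> {y\<in>L. i*s < y}"
      proof
        fix y assume y: "y \<in> insert x T"
        show "y \<in> {y\<in>L. i*s < y}"
        proof (cases "y = x")
          case True then show ?thesis using x xg L0_def by auto
        next
          case False
          then have yT: "y \<in> T" using y by auto
          have "x \<in> L - T" using x L0_def by auto
          then have "x < y" using T(3) yT by blast
          then show ?thesis using yT T(1) xg by auto
        qed
      qed
      moreover have "x \<notin> T" using x L0_def by auto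
      ultimately have "t + 1 \<le> card {y\<in>L. i*s < y}"
        using card_mono[of "{y\<in>L. i*s < y}" "insert x T"] fL fT T(2) by simp
      moreover have "{y\<in>L. i*s < y} = L - {y\<in>L. y \<le> i*s}" by auto
      then have "card {y\<in>L. i*s < y} = card L - rk L (i*s)"
        unfolding rk_def using fL by (simp add: card_Diff_subset)
      ultimately show False using LA(2) rki by simp
    qed
  qed
  have L0A: "L0 \<in> Aset s t i"
    unfolding Aset_def
  proof (intro CollectI conjI allI impI)
    show "L0 \<subseteq> {1..i*s}" by (rule L0sub)
    show "card L0 = i*t" by (rule cL0)
    fix k assume k: "k \<le> i"
    show "k*t \<le> rk L0 (k*s)"
    proof (cases "\<exists>z\<in>T. z \<le> k*s")
      case True
      then obtain z where z: "z \<in> T" "z \<le> k*s" by blast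
      have "\<forall>y\<in>L0. y \<le> k*s"
      proof
        fix y assume "y \<in> L0"
        then have "y < z" using T(3) z(1) L0_def by blast
        then show "y \<le> k*s" using z(2) by simp
      qed
      then have "rk L0 (k*s) = i*t" using rk_all cL0 by simp
      then show ?thesis using k by simp
    next
      case False
      then have "{y\<in>L0. y \<le> k*s} = {y\<in>L. y \<le> k*s}" unfolding L0_def by auto
      then have "rk L0 (k*s) = rk L (k*s)" unfolding rk_def by simp
      then show ?thesis using LA(3) k by simp
    qed
  qed
  note st = Suc.IH[OF L0A]
  have spl: "{1..i*s} \<union> ?Bl = {1..Suc i*s}" by (rule interval_split) simp
  have Tsub: "T \<subseteq> ({1..i*s} - L0) \<union> ?Bl" using T(1) LA(1) spl L0_def by auto
  have "((({1..i*s} - L0) \<union> ?Bl) - T, L0 \<union> T) \<in> tennis_states s t (Suc i)"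
    using st Tsub T(2) by auto
  moreover have "L0 \<union> T = L" using T(1) L0_def by auto
  moreover have "(({1..i*s} - L0) \<union> ?Bl) - T = {1..Suc i*s} - L"
    using spl L0sub T(1) L0_def LA(1) by auto
  ultimately show ?case by simp
qed

lemma lawns_eq: assumes "t \<le> s" shows "tennis_lawns s t n = Aset s t n"
proof
  show "tennis_lawns s t n \<subseteq> Aset s t n"
  proof
    fix L assume "L \<in> tennis_lawns s t n"
    then obtain P where "(P, L) \<in> tennis_states s t n" unfolding tennis_lawns_def by force
    from tennis_inv[OF this] show "L \<in> Aset s t n" unfolding Aset_def by blast
  qed
  show "Aset s t n \<subseteq> tennis_lawns s t n"
  proof
    fix L assume "L \<in> Aset s t n"
    from tennis_complete[OF \<open>t \<le> s\<close> this] show "L \<in> tennis_lawns s t n"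
      unfolding tennis_lawns_def by force
  qed
qed



definition Bset :: "nat \<Rightarrow> nat \<Rightarrow> nat \<Rightarrow> nat set set" where
  "Bset s t n = {X. X \<subseteq> {1..(n+1)*s} \<and> card X = (n+1)*t \<and>
      (\<forall>j\<in>{1..n+1}. j*t \<le> rk X ((j-1)*s + t))}"

definition shl :: "nat \<Rightarrow> nat set \<Rightarrow> nat set" where
  "shl t R = (\<lambda>x. x - t) ` (R - {1..t})"
definition shr :: "nat \<Rightarrow> nat set \<Rightarrow> nat set" where
  "shr t L = {1..t} \<union> (\<lambda>x. x + t) ` L"

lemma rk_shl:
  assumes R: "R \<subseteq> {1..N}" "{1..t} \<subseteq> R"
  shows "rk (shl t R) m = rk R (m + t) - t"
proof -
  have fR: "finite R" using R(1) finite_subset by blast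
  have eq: "{y\<in>shl t R. y \<le> m} = (\<lambda>x. x - t) ` ({x\<in>R. x \<le> m + t} - {1..t})"
  proof
    show "{y\<in>shl t R. y \<le> m} \<subseteq> (\<lambda>x. x - t) ` ({x\<in>R. x \<le> m + t} - {1..t})"
    proof
      fix y assume "y \<in> {y\<in>shl t R. y \<le> m}"
      then obtain x where x: "x \<in> R" "x \<notin> {1..t}" "y = x - t" "y \<le> m" unfolding shl_def by auto
      have "1 \<le> x" using x R by auto
      then have "t < x" using x by auto
      then show "y \<in> (\<lambda>x. x - t) ` ({x\<in>R. x \<le> m + t} - {1..t})" using x by auto
    qed
    show "(\<lambda>x. x - t) ` ({x\<in>R. x \<le> m + t} - {1..t}) \<subseteq> {y\<in>shl t R. y \<le> m}"
      unfolding shl_def by auto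
  qed
  have inj: "inj_on (\<lambda>x. x - t) ({x\<in>R. x \<le> m + t} - {1..t})"
  proof (rule inj_onI)
    fix x y assume "x \<in> {x\<in>R. x \<le> m + t} - {1..t}" "y \<in> {x\<in>R. x \<le> m + t} - {1..t}" "x - t = y - t"
    moreover have "1 \<le> x" "1 \<le> y" using calculation R by auto
    ultimately show "x = y" by auto
  qed
  have sub: "{1..t} \<subseteq> {x\<in>R. x \<le> m + t}" using R by auto
  have "rk (shl t R) m = card ({x\<in>R. x \<le> m + t} - {1..t})"
    unfolding rk_def eq using card_image[OF inj] .
  also have "\<dots> = rk R (m + t) - t" unfolding rk_def
    using card_Diff_subset[OF _ sub] by simp
  finally show ?thesis .
qed

lemma rk_shr:
  assumes L: "L \<subseteq> {1..M}"
  shows "rk (shr t L) (m + t) = t + rk L m"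
proof -
  have fL: "finite L" using L finite_subset by blast
  have eq: "{y\<in>shr t L. y \<le> m + t} = {1..t} \<union> (\<lambda>x. x + t) ` {y\<in>L. y \<le> m}"
    unfolding shr_def by auto
  have dis: "{1..t} \<inter> (\<lambda>x. x + t) ` {y\<in>L. y \<le> m} = {}" using L by auto
  have "card ((\<lambda>x. x + t) ` {y\<in>L. y \<le> m}) = rk L m" unfolding rk_def
    by (auto intro: card_image simp: inj_on_def)
  then show ?thesis unfolding rk_def eq using card_Un_disjoint[OF _ _ dis] fL by simp
qed

lemma B_facts:
  assumes t1: "1 \<le> t" and ts: "t \<le> s" and X: "X \<in> Bset s t n"
  shows "{1..t} \<subseteq> X" "X \<subseteq> {1..n*s + t}"
proof -
  have XN: "X \<subseteq> {1..(n+1)*s}" and cX: "card X = (n+1)*t"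
    and cond: "\<forall>j\<in>{1..n+1}. j*t \<le> rk X ((j-1)*s + t)" using X unfolding Bset_def by auto
  have fX: "finite X" using XN finite_subset by blast
  have "t \<le> rk X t" using cond[rule_format, of 1] by simp
  moreover have sub1: "{y\<in>X. y \<le> t} \<subseteq> {1..t}" using XN by auto
  moreover have "card {y\<in>X. y \<le> t} \<le> card {1..t}" by (rule card_mono[OF finite_atLeastAtMost sub1])
  ultimately have "card {y\<in>X. y \<le> t} = card {1..t}"
    unfolding rk_def by simp
  then have "{y\<in>X. y \<le> t} = {1..t}" by (rule card_subset_eq[OF finite_atLeastAtMost sub1])
  then show "{1..t} \<subseteq> X" by auto
  have "(n+1)*t \<le> rk X (n*s + t)" using cond[rule_format, of "n+1"] by simp
  moreover have sub2: "{y\<in>X. y \<le> n*s + t} \<subseteq> X" by auto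
  moreover have "card {y\<in>X. y \<le> n*s + t} \<le> card X" by (rule card_mono[OF fX sub2])
  ultimately have "card {y\<in>X. y \<le> n*s + t} = card X"
    unfolding rk_def using cX by linarith
  then have "{y\<in>X. y \<le> n*s + t} = X" by (rule card_subset_eq[OF fX sub2])
  then show "X \<subseteq> {1..n*s + t}" using XN by (metis (no_types, lifting) atLeastAtMost_iff mem_Collect_eq subset_eq)
qed

lemma shift_bij:
  assumes t1: "1 \<le> t" and ts: "t \<le> s"
  shows "bij_betw (shl t) (Bset s t n) (Aset s t n)"
proof (rule bij_betw_byWitness[where f' = "shr t"])
  show "\<forall>R\<in>Bset s t n. shr t (shl t R) = R"
  proof
    fix R assume R: "R \<in> Bset s t n"
    note BF = B_facts[OF t1 ts R]
    have "\<forall>x\<in>R - {1..t}. t < x" using BF by auto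
    then have "(\<lambda>x. x - t + t) ` (R - {1..t}) = id ` (R - {1..t})"
      by (intro image_cong) (simp, metis id_apply le_add_diff_inverse2 less_imp_le_nat)
    then have "(\<lambda>x. x + t) ` ((\<lambda>x. x - t) ` (R - {1..t})) = R - {1..t}"
      by (simp add: image_image)
    then show "shr t (shl t R) = R" unfolding shr_def shl_def using BF by auto
  qed
  show "\<forall>L\<in>Aset s t n. shl t (shr t L) = L"
  proof
    fix L assume L: "L \<in> Aset s t n"
    then have "L \<subseteq> {1..n*s}" unfolding Aset_def by auto
    then have "shr t L - {1..t} = (\<lambda>x. x + t) ` L" unfolding shr_def by auto
    then show "shl t (shr t L) = L" unfolding shl_def by (simp add: image_image)
  qed
  show "shl t ` Bset s t n \<subseteq> Aset s t n"
  proof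
    fix L assume "L \<in> shl t ` Bset s t n"
    then obtain R where R: "R \<in> Bset s t n" and L: "L = shl t R" by auto
    note BF = B_facts[OF t1 ts R]
    have XN: "R \<subseteq> {1..(n+1)*s}" and cX: "card R = (n+1)*t"
      and cond: "\<forall>j\<in>{1..n+1}. j*t \<le> rk R ((j-1)*s + t)" using R unfolding Bset_def by auto
    have fR: "finite R" using XN finite_subset by blast
    have inj: "inj_on (\<lambda>x. x - t) (R - {1..t})"
    proof (rule inj_onI)
      fix x y assume "x \<in> R - {1..t}" "y \<in> R - {1..t}" "x - t = y - t"
      moreover have "1 \<le> x" "1 \<le> y" using calculation XN by auto
      ultimately show "x = y" by auto
    qed
    have c1: "L \<subseteq> {1..n*s}"
    proof
      fix y assume "y \<in> L"
      then obtain x where "x \<in> R" "x \<notin> {1..t}" "y = x - t" using L unfolding shl_def by auto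
      moreover have "1 \<le> x" "x \<le> n*s + t" using calculation BF by auto
      ultimately show "y \<in> {1..n*s}" by auto
    qed
    have c2: "card L = n*t" unfolding L shl_def using card_image[OF inj] card_Diff_subset[OF _ BF(1)] cX
      by simp
    have c3: "\<forall>k\<le>n. k*t \<le> rk L (k*s)"
    proof (intro allI impI)
      fix k assume k: "k \<le> n"
      have "rk L (k*s) = rk R (k*s + t) - t" unfolding L by (rule rk_shl[OF XN BF(1)])
      moreover have "(k+1)*t \<le> rk R (k*s + t)" using cond[rule_format, of "k+1"] k by simp
      ultimately show "k*t \<le> rk L (k*s)" by simp
    qed
    show "L \<in> Aset s t n" unfolding Aset_def using c1 c2 c3 by blast
  qed
  show "shr t ` Aset s t n \<subseteq> Bset s t n"
  proof
    fix X assume "X \<in> shr t ` Aset s t n"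
    then obtain L where L: "L \<in> Aset s t n" and X: "X = shr t L" by auto
    have LA: "L \<subseteq> {1..n*s}" "card L = n*t" "\<forall>k\<le>n. k*t \<le> rk L (k*s)"
      using L unfolding Aset_def by auto
    have fL: "finite L" using LA(1) finite_subset by blast
    have c1: "X \<subseteq> {1..(n+1)*s}"
    proof -
      have "n*s + t \<le> (n+1)*s" using ts by simp
      then show ?thesis unfolding X shr_def using LA(1) ts by auto
    qed
    have dis: "{1..t} \<inter> (\<lambda>x. x + t) ` L = {}" using LA(1) by auto
    have "card ((\<lambda>x. x + t) ` L) = n*t" using LA(2) by (simp add: card_image inj_on_def)
    then have c2: "card X = (n+1)*t" unfolding X shr_def using card_Un_disjoint[OF _ _ dis] fL by simp
    have c3: "\<forall>j\<in>{1..n+1}. j*t \<le> rk X ((j-1)*s + t)"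
    proof
      fix j assume j: "j \<in> {1..n+1}"
      have "rk X ((j-1)*s + t) = t + rk L ((j-1)*s)" unfolding X by (rule rk_shr[OF LA(1)])
      moreover have "(j-1)*t \<le> rk L ((j-1)*s)" using LA(3) j by auto
      moreover have "j*t = t + (j-1)*t" using j by (cases j) auto
      ultimately show "j*t \<le> rk X ((j-1)*s + t)" by simp
    qed
    show "X \<in> Bset s t n" unfolding Bset_def using c1 c2 c3 by blast
  qed
qed



lemma cells_eq: "cells [n+1, n+1] = {1,2} \<times> {1..n+1}"
proof -
  have nth: "[n+1,n+1] ! (i-1) = n+1" if "1 \<le> i" "i \<le> 2" for i
  proof -
    have "i = 1 \<or> i = 2" using that by auto
    then show ?thesis by auto
  qed
  have "\<And>i. 1 \<le> i \<Longrightarrow> i \<le> 2 \<Longrightarrow> i = 1 \<or> i = (2::nat)" by auto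
  then show ?thesis unfolding cells_def using nth by fastforce
qed

lemma dt_eq: "t \<le> s \<Longrightarrow> density_total [n+1, n+1] (\<lambda>(i, j). if i = 1 then t else s - t) = (n+1)*s"
  unfolding density_total_def cells_eq
  by (simp add: sum.cartesian_product[symmetric] add_mult_distrib2[symmetric])

lemma svt_facts:
  assumes ts: "t \<le> s" and S: "S \<in> SVT [n+1, n+1] (\<lambda>(i, j). if i = 1 then t else s - t)"
  shows "\<And>i j. \<not> (i \<in> {1,2} \<and> j \<in> {1..n+1}) \<Longrightarrow> S (i,j) = {}"
    and "\<And>j. 1 \<le> j \<Longrightarrow> j \<le> n+1 \<Longrightarrow> finite (S (1,j)) \<and> card (S (1,j)) = t"
    and "\<And>j. 1 \<le> j \<Longrightarrow> j \<le> n+1 \<Longrightarrow> finite (S (2,j)) \<and> card (S (2,j)) = s - t"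
    and "\<And>j a b. 1 \<le> j \<Longrightarrow> Suc j \<le> n+1 \<Longrightarrow> a \<in> S (1,j) \<Longrightarrow> b \<in> S (1, Suc j) \<Longrightarrow> a < b"
    and "\<And>j a b. 1 \<le> j \<Longrightarrow> Suc j \<le> n+1 \<Longrightarrow> a \<in> S (2,j) \<Longrightarrow> b \<in> S (2, Suc j) \<Longrightarrow> a < b"
    and "\<And>i j. 1 \<le> i \<Longrightarrow> i \<le> n+1 \<Longrightarrow> 1 \<le> j \<Longrightarrow> j \<le> n+1 \<Longrightarrow> i \<noteq> j \<Longrightarrow> S (1,i) \<inter> S (1,j) = {}"
    and "\<And>i j. 1 \<le> i \<Longrightarrow> i \<le> n+1 \<Longrightarrow> 1 \<le> j \<Longrightarrow> j \<le> n+1 \<Longrightarrow> i \<noteq> j \<Longrightarrow> S (2,i) \<inter> S (2,j) = {}"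
    and "\<And>j a b. 1 \<le> j \<Longrightarrow> j \<le> n+1 \<Longrightarrow> a \<in> S (1,j) \<Longrightarrow> b \<in> S (2,j) \<Longrightarrow> a < b"
    and "(\<Union>j\<in>{1..n+1}. S (1,j)) \<union> (\<Union>j\<in>{1..n+1}. S (2,j)) = {1..(n+1)*s}"
    and "(\<Union>j\<in>{1..n+1}. S (1,j)) \<inter> (\<Union>j\<in>{1..n+1}. S (2,j)) = {}"
proof -
  note D = S[unfolded SVT_def cells_eq dt_eq[OF ts], simplified]
  show "\<And>i j. \<not> (i \<in> {1,2} \<and> j \<in> {1..n+1}) \<Longrightarrow> S (i,j) = {}" using D by auto
  show "\<And>j. 1 \<le> j \<Longrightarrow> j \<le> n+1 \<Longrightarrow> finite (S (1,j)) \<and> card (S (1,j)) = t" using D by auto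
  show "\<And>j. 1 \<le> j \<Longrightarrow> j \<le> n+1 \<Longrightarrow> finite (S (2,j)) \<and> card (S (2,j)) = s - t" using D by auto
  have row: "\<forall>i j. (i,j) \<in> {1,2}\<times>{1..n+1} \<and> (i, Suc j) \<in> {1,2}\<times>{1..n+1} \<longrightarrow> (\<forall>a\<in>S(i,j). \<forall>b\<in>S(i,Suc j). a<b)"
    using S[unfolded SVT_def cells_eq, THEN CollectD, THEN conjunct2, THEN conjunct2, THEN conjunct2, THEN conjunct2, THEN conjunct1] .
  have col: "\<forall>i j. (i,j) \<in> {1,2}\<times>{1..n+1} \<and> (Suc i, j) \<in> {1,2}\<times>{1..n+1} \<longrightarrow> (\<forall>a\<in>S(i,j). \<forall>b\<in>S(Suc i,j). a<b)"
    using S[unfolded SVT_def cells_eq, THEN CollectD, THEN conjunct2, THEN conjunct2, THEN conjunct2, THEN conjunct2, THEN conjunct2] .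
  show "a < b" if "1 \<le> j" "Suc j \<le> n+1" "a \<in> S (1,j)" "b \<in> S (1, Suc j)" for j a b
    using row[rule_format, of 1 j a b] that by simp
  show "a < b" if "1 \<le> j" "Suc j \<le> n+1" "a \<in> S (2,j)" "b \<in> S (2, Suc j)" for j a b
    using row[rule_format, of 2 j a b] that by simp
  show "\<And>i j. 1 \<le> i \<Longrightarrow> i \<le> n+1 \<Longrightarrow> 1 \<le> j \<Longrightarrow> j \<le> n+1 \<Longrightarrow> i \<noteq> j \<Longrightarrow> S (1,i) \<inter> S (1,j) = {}"
    using D by auto
  show "\<And>i j. 1 \<le> i \<Longrightarrow> i \<le> n+1 \<Longrightarrow> 1 \<le> j \<Longrightarrow> j \<le> n+1 \<Longrightarrow> i \<noteq> j \<Longrightarrow> S (2,i) \<inter> S (2,j) = {}"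
    using D by auto
  show "a < b" if "1 \<le> j" "j \<le> n+1" "a \<in> S (1,j)" "b \<in> S (2,j)" for j a b
    using col[rule_format, of 1 j a b] that by (simp add: numeral_2_eq_2)
  show "(\<Union>j\<in>{1..n+1}. S (1,j)) \<union> (\<Union>j\<in>{1..n+1}. S (2,j)) = {1..(n+1)*s}"
    using D by auto
  have dj: "\<forall>j\<in>{1..n+1}. \<forall>k\<in>{1..n+1}. S (1,j) \<inter> S (2,k) = {}" using D by auto
  show "(\<Union>j\<in>{1..n+1}. S (1,j)) \<inter> (\<Union>j\<in>{1..n+1}. S (2,j)) = {}"
  proof (rule ccontr)
    assume "(\<Union>j\<in>{1..n+1}. S (1,j)) \<inter> (\<Union>j\<in>{1..n+1}. S (2,j)) \<noteq> {}"
    then obtain x j k where "j \<in> {1..n+1}" "k \<in> {1..n+1}" "x \<in> S (1,j)" "x \<in> S (2,k)" by blast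
    then show False using dj by blast
  qed
qed



lemma svt_intro:
  assumes ts: "t \<le> s"
    and out: "\<And>i j. \<not> (i \<in> {1,2} \<and> j \<in> {1..n+1}) \<Longrightarrow> S (i,j) = {}"
    and f1: "\<And>j. 1 \<le> j \<Longrightarrow> j \<le> n+1 \<Longrightarrow> finite (S (1,j)) \<and> card (S (1,j)) = t"
    and f2: "\<And>j. 1 \<le> j \<Longrightarrow> j \<le> n+1 \<Longrightarrow> finite (S (2,j)) \<and> card (S (2,j)) = s - t"
    and o1: "\<And>j a b. 1 \<le> j \<Longrightarrow> Suc j \<le> n+1 \<Longrightarrow> a \<in> S (1,j) \<Longrightarrow> b \<in> S (1, Suc j) \<Longrightarrow> a < b"
    and o2: "\<And>j a b. 1 \<le> j \<Longrightarrow> Suc j \<le> n+1 \<Longrightarrow> a \<in> S (2,j) \<Longrightarrow> b \<in> S (2, Suc j) \<Longrightarrow> a < b"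
    and d1: "\<And>i j. 1 \<le> i \<Longrightarrow> i \<le> n+1 \<Longrightarrow> 1 \<le> j \<Longrightarrow> j \<le> n+1 \<Longrightarrow> i \<noteq> j \<Longrightarrow> S (1,i) \<inter> S (1,j) = {}"
    and d2: "\<And>i j. 1 \<le> i \<Longrightarrow> i \<le> n+1 \<Longrightarrow> 1 \<le> j \<Longrightarrow> j \<le> n+1 \<Longrightarrow> i \<noteq> j \<Longrightarrow> S (2,i) \<inter> S (2,j) = {}"
    and d12: "\<And>j k. 1 \<le> j \<Longrightarrow> j \<le> n+1 \<Longrightarrow> 1 \<le> k \<Longrightarrow> k \<le> n+1 \<Longrightarrow> S (1,j) \<inter> S (2,k) = {}"
    and col: "\<And>j a b. 1 \<le> j \<Longrightarrow> j \<le> n+1 \<Longrightarrow> a \<in> S (1,j) \<Longrightarrow> b \<in> S (2,j) \<Longrightarrow> a < b"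
    and un: "(\<Union>j\<in>{1..n+1}. S (1,j)) \<union> (\<Union>j\<in>{1..n+1}. S (2,j)) = {1..(n+1)*s}"
  shows "S \<in> SVT [n+1, n+1] (\<lambda>(i, j). if i = 1 then t else s - t)"
  unfolding SVT_def cells_eq dt_eq[OF ts]
proof (intro CollectI conjI)
  show "\<forall>c. c \<notin> {1::nat,2} \<times> {1..n+1} \<longrightarrow> S c = {}" using out by auto
  show "\<forall>c\<in>{1::nat,2} \<times> {1..n+1}. finite (S c) \<and> card (S c) = (case c of (i, j) \<Rightarrow> if i = 1 then t else s - t)"
    using f1 f2 by auto
  show "\<forall>c\<in>{1::nat,2} \<times> {1..n+1}. \<forall>d\<in>{1::nat,2} \<times> {1..n+1}. c \<noteq> d \<longrightarrow> S c \<inter> S d = {}"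
  proof (intro ballI impI)
    fix c d assume c: "c \<in> {1::nat,2} \<times> {1..n+1}" and d: "d \<in> {1::nat,2} \<times> {1..n+1}" and cd: "c \<noteq> d"
    obtain i j where cij: "c = (i,j)" by force
    obtain i' j' where dij: "d = (i',j')" by force
    have j: "1 \<le> j" "j \<le> n+1" "1 \<le> j'" "j' \<le> n+1" using c d cij dij by auto
    have "i = 1 \<or> i = 2" "i' = 1 \<or> i' = 2" using c d cij dij by auto
    then show "S c \<inter> S d = {}"
    proof (elim disjE)
      assume "i = 1" "i' = 1" then show ?thesis using cij dij cd j d1[of j j'] by auto
    next
      assume "i = 2" "i' = 2" then show ?thesis using cij dij cd j d2[of j j'] by auto
    next
      assume "i = 1" "i' = 2" then show ?thesis using cij dij j d12[of j j'] by auto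
    next
      assume "i = 2" "i' = 1" then show ?thesis using cij dij j d12[of j' j] by auto
    qed
  qed
  have "(\<Union>c\<in>{1::nat,2} \<times> {1..n+1}. S c) = (\<Union>j\<in>{1..n+1}. S (1,j)) \<union> (\<Union>j\<in>{1..n+1}. S (2,j))"
    by auto
  then show "(\<Union>c\<in>{1::nat,2} \<times> {1..n+1}. S c) = {1..(n+1)*s}" using un by simp
  show "\<forall>i j. (i, j) \<in> {1::nat,2} \<times> {1..n+1} \<and> (i, Suc j) \<in> {1::nat,2} \<times> {1..n+1} \<longrightarrow>
          (\<forall>a\<in>S (i, j). \<forall>b\<in>S (i, Suc j). a < b)"
  proof (intro allI impI ballI)
    fix i j a b assume h: "(i, j) \<in> {1::nat,2} \<times> {1..n+1} \<and> (i, Suc j) \<in> {1::nat,2} \<times> {1..n+1}"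
      and a: "a \<in> S (i,j)" and b: "b \<in> S (i, Suc j)"
    have "i = 1 \<or> i = 2" "1 \<le> j" "Suc j \<le> n+1" using h by auto
    then show "a < b" using o1[of j a b] o2[of j a b] a b by auto
  qed
  show "\<forall>i j. (i, j) \<in> {1::nat,2} \<times> {1..n+1} \<and> (Suc i, j) \<in> {1::nat,2} \<times> {1..n+1} \<longrightarrow>
          (\<forall>a\<in>S (i, j). \<forall>b\<in>S (Suc i, j). a < b)"
  proof (intro allI impI ballI)
    fix i j a b assume h: "(i, j) \<in> {1::nat,2} \<times> {1..n+1} \<and> (Suc i, j) \<in> {1::nat,2} \<times> {1..n+1}"
      and a: "a \<in> S (i,j)" and b: "b \<in> S (Suc i, j)"
    have "i = 1" "1 \<le> j" "j \<le> n+1" using h by auto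
    then show "a < b" using col[of j a b] a b by (auto simp: numeral_2_eq_2)
  qed
qed



definition Rof :: "nat \<Rightarrow> (nat \<times> nat \<Rightarrow> nat set) \<Rightarrow> nat set" where
  "Rof n S = (\<Union>j\<in>{1..n+1}. S (1,j))"

definition chk :: "nat set \<Rightarrow> nat \<Rightarrow> nat \<Rightarrow> nat set" where
  "chk X c j = {x\<in>X. (j-1)*c < rk X x \<and> rk X x \<le> j*c}"

definition Psi :: "nat \<Rightarrow> nat \<Rightarrow> nat \<Rightarrow> nat set \<Rightarrow> nat \<times> nat \<Rightarrow> nat set" where
  "Psi s t n X = (\<lambda>(i,j). if i = 1 \<and> 1 \<le> j \<and> j \<le> n+1 then chk X t j
      else if i = 2 \<and> 1 \<le> j \<and> j \<le> n+1 then chk ({1..(n+1)*s} - X) (s-t) j else {})"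

lemma arith_id: "t \<le> s \<Longrightarrow> 1 \<le> (j::nat) \<Longrightarrow> (j-1)*s + t = j*t + (j-1)*(s-t)"
proof -
  assume ts: "t \<le> s" and j: "1 \<le> (j::nat)"
  obtain k where k: "j = Suc k" using j by (cases j) auto
  have "k*t \<le> k*s" using ts by simp
  moreover have "k*(s-t) = k*s - k*t" by (simp add: diff_mult_distrib2)
  ultimately show ?thesis using k by simp
qed

lemma chk_ord: "finite X \<Longrightarrow> a \<in> chk X c j \<Longrightarrow> b \<in> chk X c (Suc j) \<Longrightarrow> a < b"
  unfolding chk_def using rk_less_imp by fastforce

lemma chk_disj: assumes "finite X" "1 \<le> i" "1 \<le> j" "i \<noteq> j" shows "chk X c i \<inter> chk X c j = {}"
proof (rule ccontr)
  assume "chk X c i \<inter> chk X c j \<noteq> {}"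
  then obtain x where x: "x \<in> chk X c i" "x \<in> chk X c j" by blast
  show False
  proof (cases "i < j")
    case True
    then have "i*c \<le> (j-1)*c" by (intro mult_le_mono1) simp
    moreover have "rk X x \<le> i*c" "(j-1)*c < rk X x" using x unfolding chk_def by auto
    ultimately show False by linarith
  next
    case False
    then have "j*c \<le> (i-1)*c" using assms by (intro mult_le_mono1) simp
    moreover have "rk X x \<le> j*c" "(i-1)*c < rk X x" using x unfolding chk_def by auto
    ultimately show False by linarith
  qed
qed

lemma psi_rof:
  assumes t1: "1 \<le> t" and ts: "t \<le> s" and S: "S \<in> SVT [n+1, n+1] (\<lambda>(i, j). if i = 1 then t else s - t)"
  shows "Psi s t n (Rof n S) = S"
proof -
  note SF = svt_facts[OF ts S]
  define C where "C = (\<Union>j\<in>{1..n+1}. S (2,j))"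
  have CR: "C = {1..(n+1)*s} - Rof n S" using SF(9) SF(10) unfolding C_def Rof_def by blast
  have r1: "S (1,j) = chk (Rof n S) t j" if "1 \<le> j" "j \<le> n+1" for j
    unfolding chk_def Rof_def
    by (rule row_rank[where F = "\<lambda>j. S (1,j)" and m = "n+1"]) (use SF(2) SF(4) SF(6) that in auto)
  have r2: "S (2,j) = chk C (s-t) j" if "1 \<le> j" "j \<le> n+1" for j
    unfolding chk_def C_def
    by (rule row_rank[where F = "\<lambda>j. S (2,j)" and m = "n+1"]) (use SF(3) SF(5) SF(7) that in auto)
  show ?thesis
  proof
    fix p :: "nat \<times> nat"
    obtain i j where p: "p = (i,j)" by force
    show "Psi s t n (Rof n S) p = S p"
    proof (cases "i \<in> {1,2} \<and> j \<in> {1..n+1}")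
      case True
      then show ?thesis unfolding p Psi_def using r1 r2 CR by auto
    next
      case False
      then show ?thesis unfolding p Psi_def using SF(1)[of i j] by auto
    qed
  qed
qed

lemma rof_psi:
  assumes X: "X \<in> Bset s t n"
  shows "Rof n (Psi s t n X) = X"
proof -
  have XN: "X \<subseteq> {1..(n+1)*s}" and cX: "card X = (n+1)*t" using X unfolding Bset_def by auto
  have fX: "finite X" using XN finite_subset by blast
  have "Rof n (Psi s t n X) = (\<Union>j\<in>{1..n+1}. chk X t j)" unfolding Rof_def Psi_def by simp
  also have "\<dots> = X" unfolding chk_def by (rule row_union[OF fX cX])
  finally show ?thesis .
qed



lemma rof_B:
  assumes t1: "1 \<le> t" and ts: "t \<le> s" and S: "S \<in> SVT [n+1, n+1] (\<lambda>(i, j). if i = 1 then t else s - t)"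
  shows "Rof n S \<in> Bset s t n"
proof -
  note SF = svt_facts[OF ts S]
  define R where "R = Rof n S"
  define C where "C = (\<Union>j\<in>{1..n+1}. S (2,j))"
  have CR: "C = {1..(n+1)*s} - R" using SF(9) SF(10) unfolding C_def R_def Rof_def by blast
  have RN: "R \<subseteq> {1..(n+1)*s}" using SF(9) unfolding R_def Rof_def by blast
  have fR: "finite R" using RN finite_subset by blast
  have cR: "card R = (n+1)*t" unfolding R_def Rof_def
    by (rule card_prefix[where F = "\<lambda>j. S (1,j)" and m = "n+1"]) (use SF(2) SF(6) in auto)
  have r1: "S (1,j) = chk R t j" if "1 \<le> j" "j \<le> n+1" for j
    unfolding chk_def R_def Rof_def
    by (rule row_rank[where F = "\<lambda>j. S (1,j)" and m = "n+1"]) (use SF(2) SF(4) SF(6) that in auto)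
  have ro1: "\<And>i j a b. 1 \<le> i \<Longrightarrow> i < j \<Longrightarrow> j \<le> n+1 \<Longrightarrow> a \<in> S (1,i) \<Longrightarrow> b \<in> S (1,j) \<Longrightarrow> a < b"
    by (rule row_ord[where c=t and m="n+1" and F="\<lambda>j. S (1,j)"]) (use t1 SF(2) SF(4) in auto)
  have cond: "\<forall>j\<in>{1..n+1}. j*t \<le> rk R ((j-1)*s + t)"
  proof
    fix j assume j: "j \<in> {1..n+1}"
    have "j*t \<le> (n+1)*t" using j by (intro mult_le_mono1) simp
    moreover have "1 \<le> j*t" using j t1 by simp
    ultimately have "j*t \<in> {1..card R}" using cR by simp
    then obtain x where xR: "x \<in> R" and rx: "rk R x = j*t"
      using rk_bij[OF fR] unfolding bij_betw_def by (metis imageE)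
    have jt: "(j-1)*t < j*t" using j t1 by (cases j) auto
    have xS: "x \<in> S (1,j)" using r1[of j] j xR rx jt unfolding chk_def by auto
    have sub: "{y\<in>C. y \<le> x} \<subseteq> (\<Union>i\<in>{1..j-1}. S (2,i))"
    proof
      fix y assume y: "y \<in> {y\<in>C. y \<le> x}"
      then obtain i where i: "1 \<le> i" "i \<le> n+1" "y \<in> S (2,i)" unfolding C_def by auto
      have "i < j"
      proof (rule ccontr)
        assume "\<not> i < j"
        then have ij: "j \<le> i" by simp
        have "x < y"
        proof (cases "i = j")
          case True then show ?thesis using SF(8)[of j x y] xS i by auto
        next
          case False
          have "S (1,i) \<noteq> {}" using SF(2)[of i] i t1 by auto
          then obtain a where a: "a \<in> S (1,i)" by blast
          have "x < a" using ro1[of j i x a] j ij False xS a i by auto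
          moreover have "a < y" using SF(8)[of i a y] a i by auto
          ultimately show ?thesis by simp
        qed
        then show False using y by auto
      qed
      then show "y \<in> (\<Union>i\<in>{1..j-1}. S (2,i))" using i by auto
    qed
    have "finite (\<Union>i\<in>{1..j-1}. S (2,i))" using SF(3) j by auto
    from card_mono[OF this sub] have "rk C x \<le> card (\<Union>i\<in>{1..j-1}. S (2,i))" unfolding rk_def .
    also have "\<dots> = (j-1)*(s-t)"
      by (rule card_prefix[where F = "\<lambda>j. S (2,j)" and m = "n+1"]) (use SF(3) SF(7) j in auto)
    finally have rC: "rk C x \<le> (j-1)*(s-t)" .
    have "x \<le> (n+1)*s" using xR RN by auto
    from rk_compl[OF RN this] have "rk R x + rk C x = x" using CR by simp
    then have "x \<le> (j-1)*s + t" using rC rx arith_id[OF ts, of j] j by simp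
    from rk_mono[OF fR this] show "j*t \<le> rk R ((j-1)*s + t)" using rx by simp
  qed
  show ?thesis unfolding Bset_def using RN cR cond R_def by blast
qed



lemma chk_card: "finite X \<Longrightarrow> card X = m*c \<Longrightarrow> 1 \<le> j \<Longrightarrow> j \<le> m \<Longrightarrow> finite (chk X c j) \<and> card (chk X c j) = c"
proof -
  assume f: "finite X" and cX: "card X = m*c" and j: "1 \<le> j" "j \<le> m"
  have "j*c \<le> card X" using cX j by simp
  from rk_interval_card[OF f this, of "(j-1)*c"] have "card (chk X c j) = j*c - (j-1)*c" unfolding chk_def .
  also have "\<dots> = c" using j by (cases j) auto
  finally show ?thesis using f unfolding chk_def by simp
qed

lemma psi_svt:
  assumes t1: "1 \<le> t" and ts: "t \<le> s" and X: "X \<in> Bset s t n"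
  shows "Psi s t n X \<in> SVT [n+1, n+1] (\<lambda>(i, j). if i = 1 then t else s - t)"
proof -
  have XN: "X \<subseteq> {1..(n+1)*s}" and cX: "card X = (n+1)*t"
    and cond: "\<forall>j\<in>{1..n+1}. j*t \<le> rk X ((j-1)*s + t)" using X unfolding Bset_def by auto
  define C where "C = {1..(n+1)*s} - X"
  have fX: "finite X" using XN finite_subset by blast
  have fC: "finite C" unfolding C_def by simp
  have "card C = (n+1)*s - (n+1)*t" unfolding C_def using card_Diff_subset[OF fX XN] cX by simp
  then have cC: "card C = (n+1)*(s-t)" by (simp add: diff_mult_distrib2)
  have P1: "Psi s t n X (1,j) = chk X t j" if "1 \<le> j" "j \<le> n+1" for j
    using that unfolding Psi_def by simp
  have P2: "Psi s t n X (2,j) = chk C (s-t) j" if "1 \<le> j" "j \<le> n+1" for j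
    using that unfolding Psi_def C_def by simp
  show ?thesis
  proof (rule svt_intro[OF ts])
    show "Psi s t n X (i,j) = {}" if "\<not> (i \<in> {1,2} \<and> j \<in> {1..n+1})" for i j
      using that unfolding Psi_def by auto
    show "finite (Psi s t n X (1,j)) \<and> card (Psi s t n X (1,j)) = t" if "1 \<le> j" "j \<le> n+1" for j
      using P1[OF that] chk_card[OF fX cX that] by simp
    show "finite (Psi s t n X (2,j)) \<and> card (Psi s t n X (2,j)) = s - t" if "1 \<le> j" "j \<le> n+1" for j
      using P2[OF that] chk_card[OF fC cC that] by simp
    show "a < b" if "1 \<le> j" "Suc j \<le> n+1" "a \<in> Psi s t n X (1,j)" "b \<in> Psi s t n X (1, Suc j)" for j a b
      using that P1[of j] P1[of "Suc j"] chk_ord[OF fX] by auto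
    show "a < b" if "1 \<le> j" "Suc j \<le> n+1" "a \<in> Psi s t n X (2,j)" "b \<in> Psi s t n X (2, Suc j)" for j a b
      using that P2[of j] P2[of "Suc j"] chk_ord[OF fC] by auto
    show "Psi s t n X (1,i) \<inter> Psi s t n X (1,j) = {}"
      if "1 \<le> i" "i \<le> n+1" "1 \<le> j" "j \<le> n+1" "i \<noteq> j" for i j
      using that P1[of i] P1[of j] chk_disj[OF fX, of i j t] by auto
    show "Psi s t n X (2,i) \<inter> Psi s t n X (2,j) = {}"
      if "1 \<le> i" "i \<le> n+1" "1 \<le> j" "j \<le> n+1" "i \<noteq> j" for i j
      using that P2[of i] P2[of j] chk_disj[OF fC, of i j "s-t"] by auto
    show "Psi s t n X (1,j) \<inter> Psi s t n X (2,k) = {}"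
      if "1 \<le> j" "j \<le> n+1" "1 \<le> k" "k \<le> n+1" for j k
      using that P1[of j] P2[of k] unfolding chk_def C_def by auto
    show "a < b" if j: "1 \<le> j" "j \<le> n+1" and a: "a \<in> Psi s t n X (1,j)" and b: "b \<in> Psi s t n X (2,j)" for j a b
    proof (rule ccontr)
      assume "\<not> a < b"
      have aX: "a \<in> X" and ra: "rk X a \<le> j*t" using a P1[OF j] unfolding chk_def by auto
      have bC: "b \<in> C" and rb: "(j-1)*(s-t) < rk C b" using b P2[OF j] unfolding chk_def by auto
      have "a \<noteq> b" using aX bC unfolding C_def by auto
      then have ba: "b < a" using \<open>\<not> a < b\<close> by simp
      have rXb: "rk X b < j*t" using rk_strict[OF fX aX ba] ra by simp
      define m where "m = (j-1)*s + t"
      have cm: "j*t \<le> rk X m" using cond j unfolding m_def by auto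
      have bm: "b < m"
      proof (rule ccontr)
        assume "\<not> b < m"
        then have "rk X m \<le> rk X b" using rk_mono[OF fX] by simp
        then show False using cm rXb by simp
      qed
      have "(j-1)*s + t \<le> (j-1)*s + s" using ts by simp
      also have "\<dots> = j*s" using j by (cases j) auto
      also have "\<dots> \<le> (n+1)*s" using j by (intro mult_le_mono1) simp
      finally have mN: "m \<le> (n+1)*s" unfolding m_def .
      have "rk X m + rk C m = m" using rk_compl[OF XN mN] unfolding C_def .
      then have "rk C m \<le> (j-1)*(s-t)" using cm arith_id[OF ts, of j] j unfolding m_def by simp
      moreover have "rk C b \<le> rk C m" using rk_mono[OF fC] bm by simp
      ultimately show False using rb by simp
    qed
    have u1: "(\<Union>j\<in>{1..n+1}. Psi s t n X (1,j)) = X"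
      using row_union[OF fX cX] P1 unfolding chk_def by simp
    have u2: "(\<Union>j\<in>{1..n+1}. Psi s t n X (2,j)) = C"
      using row_union[OF fC cC] P2 unfolding chk_def by simp
    show "(\<Union>j\<in>{1..n+1}. Psi s t n X (1,j)) \<union> (\<Union>j\<in>{1..n+1}. Psi s t n X (2,j)) = {1..(n+1)*s}"
      using u1 u2 XN unfolding C_def by auto
  qed
qed

theorem theorem4:
  fixes s t n :: nat
  assumes "1 \<le> t" and "t \<le> s"
  shows "tennis_count s t n =
         card (SVT [n + 1, n + 1] (\<lambda>(i, j). if i = 1 then t else s - t))"
proof -
  have b1: "bij_betw (Rof n) (SVT [n + 1, n + 1] (\<lambda>(i, j). if i = 1 then t else s - t)) (Bset s t n)"
  proof (rule bij_betw_byWitness[where f' = "Psi s t n"])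
    show "\<forall>S\<in>SVT [n + 1, n + 1] (\<lambda>(i, j). if i = 1 then t else s - t). Psi s t n (Rof n S) = S"
      using psi_rof[OF assms] by blast
    show "\<forall>X\<in>Bset s t n. Rof n (Psi s t n X) = X" using rof_psi by blast
    show "Rof n ` SVT [n + 1, n + 1] (\<lambda>(i, j). if i = 1 then t else s - t) \<subseteq> Bset s t n"
      using rof_B[OF assms] by blast
    show "Psi s t n ` Bset s t n \<subseteq> SVT [n + 1, n + 1] (\<lambda>(i, j). if i = 1 then t else s - t)"
      using psi_svt[OF assms] by blast
  qed
  have "tennis_count s t n = card (Aset s t n)"
    unfolding tennis_count_def lawns_eq[OF assms(2)] ..
  also have "\<dots> = card (Bset s t n)" using bij_betw_same_card[OF shift_bij[OF assms]] by simp
  also have "\<dots> = card (SVT [n + 1, n + 1] (\<lambda>(i, j). if i = 1 then t else s - t))"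
    using bij_betw_same_card[OF b1] by simp
  finally show ?thesis .
qed


end
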